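(* Let $K\in\mathbb{N}$ and let $\mathcal{S}$ be a collection of subsets $S\subset[K]$, each containing exactly four elements, such that every index $j\in[K]$ is contained in at most two sets of $\mathcal{S}$. Then there exist subsets $T(S)\subset S$, one for each $S\in\mathcal{S}$, such that $|T(S)|\ge1$ for every $S\in\mathcal{S}$, the sets $T(S)$ are pairwise disjoint, and $|T(S)|=3$ for at least $|\mathcal{S}|/4$ of the sets $S\in\mathcal{S}$. *)

theory Defs
  imports Main
begin

end

theory Submission
  imports Defs
begin

lemma three_le:
  assumes "finite V" "card {s\<in>V. x \<in> A s} \<le> 2" "a\<in>V" "b\<in>V" "c\<in>V"
    "x\<in>A a" "x\<in>A b" "x\<in>A c" "a\<noteq>b" "a\<noteq>c"
  shows "b = c"
proof (rule ccontr)
  assume "b \<noteq> c"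
  hence "card {a,b,c} = 3" using assms by auto
  moreover have "{a,b,c} \<subseteq> {s\<in>V. x \<in> A s}" using assms by auto
  hence "card {a,b,c} \<le> card {s\<in>V. x \<in> A s}" by (intro card_mono) (use assms in auto)
  ultimately show False using assms by linarith
qed

lemma deg_mono:
  assumes "finite V" "\<forall>x. card {s\<in>V. x \<in> A s} \<le> 2" "\<forall>s\<in>V. A' s \<subseteq> A s"
  shows "card {s\<in>V. x \<in> A' s} \<le> 2"
proof -
  have "card {s\<in>V. x \<in> A' s} \<le> card {s\<in>V. x \<in> A s}"
    by (rule card_mono) (use assms in auto)
  thus ?thesis using assms(2) by (meson order_trans)
qed

lemma D:
  fixes V :: "'i set" and A :: "'i \<Rightarrow> nat set" and d :: "'i \<Rightarrow> nat"
  assumes "finite V" "\<forall>v\<in>V. finite (A v)" "\<forall>x. card {v\<in>V. x \<in> A v} \<le> 2"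
    "\<forall>v\<in>V. 2 * d v \<le> card (A v)"
  shows "\<exists>T. (\<forall>v\<in>V. T v \<subseteq> A v \<and> card (T v) = d v) \<and> (\<forall>v\<in>V. \<forall>w\<in>V. v \<noteq> w \<longrightarrow> T v \<inter> T w = {})"
  using assms
proof (induction "\<Sum>v\<in>V. card (A v)" arbitrary: A d rule: less_induct)
  case less
  note fin = less.prems(1) and finA = less.prems(2) and deg = less.prems(3) and dem = less.prems(4)
  show ?case
  proof (cases "\<forall>v\<in>V. d v = 0")
    case True
    then show ?thesis by (intro exI[of _ "\<lambda>_. {}"]) auto
  next
    case False
    then obtain v where v: "v \<in> V" "d v \<noteq> 0" by auto
    hence "2 \<le> card (A v)" using dem by fastforce
    then obtain B where "B \<subseteq> A v" "card B = 2" by (meson obtain_subset_with_card_n)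
    then obtain x y where xy: "x \<in> A v" "y \<in> A v" "x \<noteq> y" by (auto simp: card_2_iff)
    have finAv: "finite (A v)" using finA v by auto
    have cpos: "card (A v) > 0" using finAv xy by (auto simp: card_gt_0_iff)
    have single: ?thesis if z: "z \<in> A v" "\<forall>u\<in>V. u \<noteq> v \<longrightarrow> z \<notin> A u" for z
    proof -
      define A' where "A' = A(v := A v - {z})"
      define d' where "d' = d(v := d v - 1)"
      have lt: "(\<Sum>s\<in>V. card (A' s)) < (\<Sum>s\<in>V. card (A s))"
        apply (rule sum_strict_mono_ex1[OF fin])
        using v z finAv cpos by (auto simp: A'_def card_Diff1_le intro!: bexI[of _ v] card_Diff1_less)
      have "\<exists>T. (\<forall>v\<in>V. T v \<subseteq> A' v \<and> card (T v) = d' v) \<and> (\<forall>v\<in>V. \<forall>w\<in>V. v \<noteq> w \<longrightarrow> T v \<inter> T w = {})"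
      proof (rule less.hyps[OF lt fin])
        show "\<forall>s\<in>V. finite (A' s)" using finA by (auto simp: A'_def)
        show "\<forall>e. card {s\<in>V. e \<in> A' s} \<le> 2"
          using deg_mono[OF fin deg, of A'] by (auto simp: A'_def)
        show "\<forall>s\<in>V. 2 * d' s \<le> card (A' s)"
          using dem v z finAv by (auto simp: A'_def d'_def card_Diff_singleton)
      qed
      then obtain T' where T': "\<forall>s\<in>V. T' s \<subseteq> A' s \<and> card (T' s) = d' s"
        "\<forall>s\<in>V. \<forall>w\<in>V. s \<noteq> w \<longrightarrow> T' s \<inter> T' w = {}" by blast
      have T'A: "\<And>s. s \<in> V \<Longrightarrow> T' s \<subseteq> A' s" "\<And>s. s \<in> V \<Longrightarrow> card (T' s) = d' s"
        using T'(1) by auto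
      define T where "T = T'(v := insert z (T' v))"
      have zn: "z \<notin> T' v" using T'(1) v unfolding A'_def by fastforce
      have "T' v \<subseteq> A v" using T'(1) v unfolding A'_def by fastforce
      hence fT: "finite (T' v)" using finite_subset[OF _ finAv] by blast
      show ?thesis
      proof (intro exI[of _ T] conjI ballI impI)
        fix s assume s: "s \<in> V"
        show "T s \<subseteq> A s" using T'A(1)[OF s] s z by (auto simp: T_def A'_def split: if_splits)
        show "card (T s) = d s" using T'A(2)[OF s] s zn fT v by (auto simp: T_def d'_def)
      next
        fix s t assume st: "s \<in> V" "t \<in> V" "s \<noteq> t"
        have zt: "z \<notin> T' a" if "a \<in> V" for a
        proof (cases "a = v")
          case True thus ?thesis using zn by simp
        next
          case False thus ?thesis using T'A(1)[OF that] z that by (auto simp: A'_def)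
        qed
        have TE: "T a \<subseteq> T' a \<union> (if a = v then {z} else {})" for a by (auto simp: T_def)
        have "T' s \<inter> T' t = {}" using T'(2) st by blast
        then show "T s \<inter> T t = {}" using TE[of s] TE[of t] zt[of s] zt[of t] st
          by (auto split: if_splits)
      qed
    qed
    show ?thesis
    proof (cases "\<forall>u\<in>V. u \<noteq> v \<longrightarrow> x \<notin> A u")
      case True then show ?thesis using single xy by blast
    next
      case False
      then obtain u where u: "u\<in>V" "u\<noteq>v" "x \<in> A u" by auto
      show ?thesis
      proof (cases "\<forall>w\<in>V. w \<noteq> v \<longrightarrow> y \<notin> A w")
        case True then show ?thesis using single xy by blast
      next
        case False
        then obtain w where w: "w\<in>V" "w\<noteq>v" "y\<in>A w" by auto
        have xonly: "\<forall>t\<in>V. t \<noteq> v \<longrightarrow> t \<noteq> u \<longrightarrow> x \<notin> A t"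
        proof (intro ballI impI notI)
          fix t assume "t\<in>V" "t\<noteq>v" "t\<noteq>u" "x \<in> A t"
          then show False using three_le[OF fin deg[rule_format], where a=v and b=u and c=t] u v xy by auto
        qed
        have yonly: "\<forall>t\<in>V. t \<noteq> v \<longrightarrow> t \<noteq> w \<longrightarrow> y \<notin> A t"
        proof (intro ballI impI notI)
          fix t assume "t\<in>V" "t\<noteq>v" "t\<noteq>w" "y \<in> A t"
          then show False using three_le[OF fin deg[rule_format], where a=v and b=w and c=t] w v xy by auto
        qed
        have finAu: "finite (A u)" "finite (A w)" using finA u w by auto
        show ?thesis
        proof (cases "u = w")
          case True
          have yu: "y \<in> A u" using w True by simp
          define A' where "A' = A(v := A v - {x,y}, u := A u - {x,y})"
          define d' where "d' = d(v := d v - 1, u := d u - 1)"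
          have c2: "card (A v - {x,y}) = card (A v) - 2" "card (A u - {x,y}) = card (A u) - 2"
            using xy yu u finAv finAu by (auto simp: card_Diff_subset)
          have lt: "(\<Sum>s\<in>V. card (A' s)) < (\<Sum>s\<in>V. card (A s))"
            apply (rule sum_strict_mono_ex1[OF fin])
            using v u c2 \<open>2 \<le> card (A v)\<close> by (auto simp: A'_def intro!: bexI[of _ v])
          have "\<exists>T. (\<forall>v\<in>V. T v \<subseteq> A' v \<and> card (T v) = d' v) \<and> (\<forall>v\<in>V. \<forall>w\<in>V. v \<noteq> w \<longrightarrow> T v \<inter> T w = {})"
          proof (rule less.hyps[OF lt fin])
            show "\<forall>s\<in>V. finite (A' s)" using finA by (auto simp: A'_def)
            show "\<forall>e. card {s\<in>V. e \<in> A' s} \<le> 2"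
              using deg_mono[OF fin deg, of A'] by (auto simp: A'_def)
            show "\<forall>s\<in>V. 2 * d' s \<le> card (A' s)"
              using dem v u c2 by (auto simp: A'_def d'_def)
          qed
          then obtain T' where T': "\<forall>s\<in>V. T' s \<subseteq> A' s \<and> card (T' s) = d' s"
            "\<forall>s\<in>V. \<forall>w\<in>V. s \<noteq> w \<longrightarrow> T' s \<inter> T' w = {}" by blast
          have T'A: "\<And>s. s \<in> V \<Longrightarrow> T' s \<subseteq> A' s" "\<And>s. s \<in> V \<Longrightarrow> card (T' s) = d' s"
            using T'(1) by auto
          define T where "T = T'(v := insert x (T' v), u := (if d u = 0 then T' u else insert y (T' u)))"
          have sub: "T' v \<subseteq> A v - {x,y}" "T' u \<subseteq> A u - {x,y}"
            using T'A(1)[OF v(1)] T'A(1)[OF u(1)] u(2) by (auto simp: A'_def)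
          have sub2: "\<forall>t\<in>V. t \<noteq> v \<longrightarrow> t \<noteq> u \<longrightarrow> T' t \<subseteq> A t"
          proof (intro ballI impI)
            fix t assume "t\<in>V" "t\<noteq>v" "t\<noteq>u"
            thus "T' t \<subseteq> A t" using T'A(1)[of t] by (simp add: A'_def)
          qed
          have fT: "finite (T' v)" "finite (T' u)" using finite_subset[OF sub(1)] finite_subset[OF sub(2)] finAv finAu by auto
          have cT: "card (T' v) = d v - 1" "card (T' u) = d u - 1"
            using T'A(2)[OF v(1)] T'A(2)[OF u(1)] u(2) by (auto simp: d'_def)
          show ?thesis
          proof (intro exI[of _ T] conjI ballI impI)
            fix s assume s: "s \<in> V"
            show "T s \<subseteq> A s" using sub sub2 s xy yu u by (auto simp: T_def)
            have nx: "x \<notin> T' v" "y \<notin> T' u" using sub by auto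
            show "card (T s) = d s" using T'A(2)[OF s] s fT v u nx cT
              by (auto simp: T_def d'_def)
          next
            fix s t assume st: "s \<in> V" "t \<in> V" "s \<noteq> t"
            define E where "E s = (if s = v then {x} else if s = u then {y} else {})" for s
            have TE: "T s \<subseteq> T' s \<union> E s" for s
              using u(2) by (auto simp: T_def E_def)
            have xn: "x \<notin> T' s \<and> y \<notin> T' s" if s: "s \<in> V" for s
            proof (cases "s = v")
              case True thus ?thesis using sub by auto
            next
              case F1: False
              show ?thesis
              proof (cases "s = u")
                case True thus ?thesis using sub by auto
              next
                case False thus ?thesis using sub2 xonly yonly s F1 \<open>u = w\<close> by blast
              qed
            qed
            have E1: "E a \<inter> T' b = {}" if "b \<in> V" for a b using xn[OF that] by (auto simp: E_def)
            have E2: "E s \<inter> E t = {}" using xy st by (auto simp: E_def)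
            have "T' s \<inter> T' t = {}" using T'(2) st by blast
            then show "T s \<inter> T t = {}" using TE[of s] TE[of t] E1[of t s] E1[of s t] E2 st by blast
          qed
        next
          case False
          have "finite (\<Union>(A ` V))" using fin finA by auto
          then obtain z where z: "z \<notin> \<Union>(A ` V)" using ex_new_if_finite[OF infinite_UNIV_nat] by blast
          have zn: "\<forall>s\<in>V. z \<notin> A s" using z by auto
          define A' where "A' = A(v := A v - {x,y}, u := insert z (A u - {x}), w := insert z (A w - {y}))"
          define d' where "d' = d(v := d v - 1)"
          have c2: "card (A v - {x,y}) = card (A v) - 2"
            using xy finAv by (auto simp: card_Diff_subset)
          have c3: "card (insert z (A u - {x})) = card (A u)" "card (insert z (A w - {y})) = card (A w)"
            using zn u w finAu card_Suc_Diff1[of "A u" x] card_Suc_Diff1[of "A w" y] by auto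
          have lt: "(\<Sum>s\<in>V. card (A' s)) < (\<Sum>s\<in>V. card (A s))"
            apply (rule sum_strict_mono_ex1[OF fin])
            using v u w c2 c3 False \<open>2 \<le> card (A v)\<close> by (auto simp: A'_def intro!: bexI[of _ v])
          have "\<exists>T. (\<forall>v\<in>V. T v \<subseteq> A' v \<and> card (T v) = d' v) \<and> (\<forall>v\<in>V. \<forall>w\<in>V. v \<noteq> w \<longrightarrow> T v \<inter> T w = {})"
          proof (rule less.hyps[OF lt fin])
            show "\<forall>s\<in>V. finite (A' s)" using finA by (auto simp: A'_def)
            show "\<forall>e. card {s\<in>V. e \<in> A' s} \<le> 2"
            proof
              fix e
              show "card {s\<in>V. e \<in> A' s} \<le> 2"
              proof (cases "e = z")
                case True
                have "{s\<in>V. e \<in> A' s} \<subseteq> {u,w}" using True zn by (auto simp: A'_def)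
                hence "card {s\<in>V. e \<in> A' s} \<le> card {u,w}" by (intro card_mono) auto
                also have "\<dots> \<le> 2" by (simp add: card_insert_le_m1)
                finally show ?thesis .
              next
                case False
                have "card {s\<in>V. e \<in> A' s} \<le> card {s\<in>V. e \<in> A s}"
                  by (rule card_mono) (use fin False in \<open>auto simp: A'_def split: if_splits\<close>)
                thus ?thesis using deg by (meson order_trans)
              qed
            qed
            show "\<forall>s\<in>V. 2 * d' s \<le> card (A' s)"
              using dem v u w c2 c3 False by (auto simp: A'_def d'_def)
          qed
          then obtain T' where T': "\<forall>s\<in>V. T' s \<subseteq> A' s \<and> card (T' s) = d' s"
            "\<forall>s\<in>V. \<forall>w\<in>V. s \<noteq> w \<longrightarrow> T' s \<inter> T' w = {}" by blast
          have T'A: "\<And>s. s \<in> V \<Longrightarrow> T' s \<subseteq> A' s" "\<And>s. s \<in> V \<Longrightarrow> card (T' s) = d' s"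
            using T'(1) by auto
          have sub: "T' v \<subseteq> A v - {x,y}" "T' u \<subseteq> insert z (A u - {x})" "T' w \<subseteq> insert z (A w - {y})"
            using T'A(1)[OF v(1)] T'A(1)[OF u(1)] T'A(1)[OF w(1)] u w False by (auto simp: A'_def)
          have sub2: "\<forall>t\<in>V. t \<noteq> v \<longrightarrow> t \<noteq> u \<longrightarrow> t \<noteq> w \<longrightarrow> T' t \<subseteq> A t"
          proof (intro ballI impI)
            fix t assume "t\<in>V" "t\<noteq>v" "t\<noteq>u" "t\<noteq>w"
            thus "T' t \<subseteq> A t" using T'A(1)[of t] by (simp add: A'_def)
          qed
          have fT: "finite (T' v)" "finite (T' u)" "finite (T' w)"
            using finite_subset[OF sub(1)] finite_subset[OF sub(2)] finite_subset[OF sub(3)] finAv finAu by auto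
          have cT: "card (T' v) = d v - 1" "card (T' u) = d u" "card (T' w) = d w"
            using T'A(2)[OF v(1)] T'A(2)[OF u(1)] T'A(2)[OF w(1)] u w by (auto simp: d'_def)
          have xz: "x \<noteq> z" "y \<noteq> z" using zn xy v by auto
          have zuw: "z \<in> T' u \<Longrightarrow> z \<notin> T' w" using T'(2) u w False by blast
          have yu: "y \<notin> A u" using yonly u False by blast
          have xw: "x \<notin> A w" using xonly w False by blast
          have xn': "x \<notin> T' s \<and> y \<notin> T' s" if s: "s \<in> V" for s
          proof (cases "s = v")
            case True thus ?thesis using sub by auto
          next
            case F1: False
            show ?thesis
            proof (cases "s = u")
              case True thus ?thesis using sub xz yu by auto
            next
              case F2: False
              show ?thesis
              proof (cases "s = w")
                case True thus ?thesis using sub xz xw by auto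
              next
                case False thus ?thesis using sub2 xonly yonly s F1 F2 by blast
              qed
            qed
          qed
          have xn: "x \<notin> T' s" "y \<notin> T' s" if "s \<in> V" for s using xn'[OF that] by auto
          show ?thesis
          proof (cases "z \<in> T' u")
            case zu: True
            define T where "T = T'(v := insert y (T' v), u := insert x (T' u - {z}))"
            show ?thesis
            proof (intro exI[of _ T] conjI ballI impI)
              fix s assume s: "s \<in> V"
              show "T s \<subseteq> A s" using sub sub2 s xy u w zu zuw by (auto simp: T_def)
              have "card (T' u) > 0" using zu fT by (auto simp: card_gt_0_iff)
              then show "card (T s) = d s" using T'A(2)[OF s] s fT v u sub cT xn[of u] xn[of v] zu
                by (auto simp: T_def d'_def card_Diff_singleton)
            next
              fix s t assume st: "s \<in> V" "t \<in> V" "s \<noteq> t"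
              define E where "E s = (if s = v then {y} else if s = u then {x} else {})" for s
              have TE: "T s \<subseteq> T' s \<union> E s" for s
                using u(2) w(2) False by (auto simp: T_def E_def)
              have E1: "E a \<inter> T' b = {}" if "b \<in> V" for a b using xn'[OF that] by (auto simp: E_def)
              have E2: "E s \<inter> E t = {}" using xy st by (auto simp: E_def)
              have "T' s \<inter> T' t = {}" using T'(2) st by blast
            then show "T s \<inter> T t = {}" using TE[of s] TE[of t] E1[of t s] E1[of s t] E2 st by blast
            qed
          next
            case zu: False
            define T where "T = T'(v := insert x (T' v), w := (if z \<in> T' w then insert y (T' w - {z}) else T' w))"
            show ?thesis
            proof (intro exI[of _ T] conjI ballI impI)
              fix s assume s: "s \<in> V"
              show "T s \<subseteq> A s" using sub sub2 s xy u w zu by (auto simp: T_def)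
              have "z \<in> T' w \<Longrightarrow> card (T' w) > 0" using fT by (auto simp: card_gt_0_iff)
              then show "card (T s) = d s" using T'A(2)[OF s] s fT v w sub cT xn[of w] xn[of v]
                by (auto simp: T_def d'_def card_Diff_singleton)
            next
              fix s t assume st: "s \<in> V" "t \<in> V" "s \<noteq> t"
              define E where "E s = (if s = v then {x} else if s = w then {y} else {})" for s
              have TE: "T s \<subseteq> T' s \<union> E s" for s
                using u(2) w(2) False by (auto simp: T_def E_def)
              have E1: "E a \<inter> T' b = {}" if "b \<in> V" for a b using xn'[OF that] by (auto simp: E_def)
              have E2: "E s \<inter> E t = {}" using xy st by (auto simp: E_def)
              have "T' s \<inter> T' t = {}" using T'(2) st by blast
            then show "T s \<inter> T t = {}" using TE[of s] TE[of t] E1[of t s] E1[of s t] E2 st by blast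
            qed
          qed
        qed
      qed
    qed
  qed
qed

theorem lemma11p5:
  fixes K :: nat and \<S> :: "nat set set"
  assumes sub: "\<And>S. S \<in> \<S> \<Longrightarrow> S \<subseteq> {1..K}"
    and four: "\<And>S. S \<in> \<S> \<Longrightarrow> card S = 4"
    and deg: "\<And>j. j \<in> {1..K} \<Longrightarrow> card {S \<in> \<S>. j \<in> S} \<le> 2"
  shows "\<exists>T :: nat set \<Rightarrow> nat set.
           (\<forall>S\<in>\<S>. T S \<subseteq> S \<and> card (T S) \<ge> 1)
         \<and> (\<forall>S\<in>\<S>. \<forall>S'\<in>\<S>. S \<noteq> S' \<longrightarrow> T S \<inter> T S' = {})
         \<and> 4 * card {S \<in> \<S>. card (T S) = 3} \<ge> card \<S>"
proof -
  have finS: "finite \<S>"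
  proof -
    have "\<S> \<subseteq> Pow {1..K}" using sub by auto
    thus ?thesis by (rule finite_subset) auto
  qed
  have finE: "finite S" if "S \<in> \<S>" for S using four[OF that] by (metis card.infinite zero_neq_numeral)
  have degS: "\<forall>x. card {S\<in>\<S>. x \<in> S} \<le> 2"
  proof
    fix x show "card {S\<in>\<S>. x \<in> S} \<le> 2"
    proof (cases "x \<in> {1..K}")
      case True thus ?thesis by (rule deg)
    next
      case False
      hence "{S\<in>\<S>. x \<in> S} = {}" using sub by blast
      thus ?thesis by (metis card.empty zero_le)
    qed
  qed
  have fa: "\<forall>v\<in>\<S>. finite v" using finE by blast
  have fb: "\<forall>v\<in>\<S>. 2 * 2 \<le> card v" using four by simp
  obtain T2' where T2': "\<forall>v\<in>\<S>. T2' v \<subseteq> v \<and> card (T2' v) = 2"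
    "\<forall>v\<in>\<S>. \<forall>w\<in>\<S>. v \<noteq> w \<longrightarrow> T2' v \<inter> T2' w = {}"
    using D[of \<S> "\<lambda>S. S" "\<lambda>_. 2", OF finS fa degS fb] by blast
  define T2 where "T2 = T2'"
  have T2: "\<And>S. S\<in>\<S> \<Longrightarrow> T2 S \<subseteq> S \<and> card (T2 S) = 2"
    "\<And>S S'. S\<in>\<S> \<Longrightarrow> S'\<in>\<S> \<Longrightarrow> S \<noteq> S' \<Longrightarrow> T2 S \<inter> T2 S' = {}"
    using T2' unfolding T2_def by auto
  define U where "U = \<Union>(T2 ` \<S>)"
  define \<sigma> where "\<sigma> x = (SOME S. S \<in> \<S> \<and> x \<in> S)" for x
  define T3 where "T3 S = T2 S \<union> {x \<in> S. x \<notin> U \<and> \<sigma> x = S}" for S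
  have T3sub: "T3 S \<subseteq> S" if "S \<in> \<S>" for S using T2(1)[OF that] by (auto simp: T3_def)
  have fT3: "finite (T3 S)" if "S \<in> \<S>" for S using finite_subset[OF T3sub[OF that] finE[OF that]] .
  have T3ge: "2 \<le> card (T3 S)" if "S \<in> \<S>" for S
  proof -
    have "card (T2 S) \<le> card (T3 S)" by (rule card_mono[OF fT3[OF that]]) (auto simp: T3_def)
    thus ?thesis using T2(1)[OF that] by simp
  qed
  have T3le: "card (T3 S) \<le> 4" if "S \<in> \<S>" for S
    using card_mono[OF finE[OF that] T3sub[OF that]] four[OF that] by simp
  have T3disj: "T3 S \<inter> T3 S' = {}" if "S \<in> \<S>" "S' \<in> \<S>" "S \<noteq> S'" for S S'
  proof -
    have "T2 S \<inter> T2 S' = {}" using T2(2)[OF that] .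
    moreover have "T2 S \<subseteq> U" "T2 S' \<subseteq> U" using that by (auto simp: U_def)
    ultimately show ?thesis using that(3) by (auto simp: T3_def)
  qed
  have T3cov: "\<exists>S'\<in>\<S>. x \<in> T3 S'" if "S \<in> \<S>" "x \<in> S" for S x
  proof (cases "x \<in> U")
    case True thus ?thesis by (auto simp: U_def T3_def)
  next
    case False
    have "\<sigma> x \<in> \<S> \<and> x \<in> \<sigma> x" unfolding \<sigma>_def by (rule someI[of _ S]) (use that in auto)
    thus ?thesis using False by (auto simp: T3_def intro!: bexI[of _ "\<sigma> x"])
  qed
  define F where "F = {S\<in>\<S>. 3 \<le> card (T3 S)}"
  define N where "N = \<S> - F"
  have N2: "card (T3 S) = 2" if "S \<in> N" for S using T3ge[of S] that by (force simp: N_def F_def)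
  define valid where "valid P h \<longleftrightarrow> P \<subseteq> N \<and> inj_on h P \<and> h ` P \<subseteq> N - P \<and> (\<forall>S\<in>P. S \<inter> T3 (h S) \<noteq> {})"
    for P and h :: "nat set \<Rightarrow> nat set"
  define C where "C P \<longleftrightarrow> P \<subseteq> \<S> \<and> (\<exists>h. valid P h)" for P
  have C0: "C {}" by (auto simp: C_def valid_def)
  have Cb: "\<forall>P. C P \<longrightarrow> card P < card \<S> + 1"
    using card_mono[OF finS] by (auto simp: C_def less_Suc_eq_le)
  obtain P where CP: "C P" and Pmax: "\<And>P'. C P' \<Longrightarrow> card P' \<le> card P"
    using Lattices_Big.ex_has_greatest_nat[of C "{}" card "card \<S> + 1", OF C0 Cb] by blast
  obtain h where vh: "valid P h" using CP by (auto simp: C_def)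
  have PN: "P \<subseteq> N" and injh: "inj_on h P" and hP: "h ` P \<subseteq> N - P" and arc: "\<forall>S\<in>P. S \<inter> T3 (h S) \<noteq> {}"
    using vh by (auto simp: valid_def)
  have NS: "N \<subseteq> \<S>" by (auto simp: N_def)
  have finP: "finite P" using finite_subset[OF PN] finite_subset[OF NS finS] by blast
  define Av where "Av = N - P - h ` P"
  have maxl: "S \<inter> T3 S' = {}" if a: "S \<in> Av" "S' \<in> Av" "S \<noteq> S'" for S S'
  proof (rule ccontr)
    assume ne: "S \<inter> T3 S' \<noteq> {}"
    define h' where "h' = h(S := S')"
    have SnP: "S \<notin> P" "S \<notin> h ` P" "S' \<notin> P" "S' \<notin> h ` P" "S \<in> N" "S' \<in> N" using a by (auto simp: Av_def)
    have "valid (insert S P) h'"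
      unfolding valid_def
    proof (intro conjI)
      show "insert S P \<subseteq> N" using PN SnP by auto
      have i1: "inj_on h' P" using injh SnP unfolding inj_on_def h'_def by auto
      have hh: "h' ` P = h ` P" using SnP unfolding h'_def by auto
      have i2: "h' S \<notin> h' ` P" using SnP hh by (simp add: h'_def)
      show "inj_on h' (insert S P)" using i1 i2 SnP by simp
      show "h' ` insert S P \<subseteq> N - insert S P" using hh hP SnP a(3) by (auto simp: h'_def)
      show "\<forall>T\<in>insert S P. T \<inter> T3 (h' T) \<noteq> {}" using arc ne SnP by (auto simp: h'_def)
    qed
    hence "C (insert S P)" using PN SnP NS unfolding C_def by blast
    hence "card (insert S P) \<le> card P" by (rule Pmax)
    moreover have "card (insert S P) = card P + 1" using finP SnP by simp
    ultimately show False by simp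
  qed
  define px where "px S = (SOME x. x \<in> S \<inter> T3 (h S))" for S
  have px: "px S \<in> S \<and> px S \<in> T3 (h S)" if "S \<in> P" for S
  proof -
    have "\<exists>x. x \<in> S \<inter> T3 (h S)" using arc that by blast
    hence "px S \<in> S \<inter> T3 (h S)" unfolding px_def by (rule someI_ex)
    thus ?thesis by simp
  qed
  have hPS: "h S \<in> \<S> \<and> h S \<notin> F \<and> h S \<notin> P \<and> h S \<noteq> S" if "S \<in> P" for S
    using hP that NS by (auto simp: N_def)
  have PS: "S \<in> \<S> \<and> S \<notin> F" if "S \<in> P" for S using PN that by (auto simp: N_def)
  have "\<forall>S\<in>F. \<exists>B. B \<subseteq> T3 S \<and> card B = 3"
  proof
    fix S assume "S \<in> F"
    hence "3 \<le> card (T3 S)" by (simp add: F_def)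
    then obtain B where "B \<subseteq> T3 S" "card B = 3" by (rule obtain_subset_with_card_n)
    thus "\<exists>B. B \<subseteq> T3 S \<and> card B = 3" by blast
  qed
  then obtain B where B: "\<And>S. S \<in> F \<Longrightarrow> B S \<subseteq> T3 S \<and> card (B S) = 3" by metis
  define T where "T S = (if S \<in> F then B S else if S \<in> P then insert (px S) (T3 S)
      else if S \<in> h ` P then T3 S - {px (inv_into P h S)} else T3 S)" for S
  have FS: "F \<subseteq> \<S>" by (auto simp: F_def)
  have Tsub: "T S \<subseteq> S" if S: "S \<in> \<S>" for S
    using B[of S] T3sub[OF S] px[of S] by (auto simp: T_def)
  have Trich: "card (T S) = 3" if S: "S \<in> F \<union> P" for S
  proof (cases "S \<in> F")
    case True thus ?thesis using B by (simp add: T_def)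
  next
    case False
    hence SP: "S \<in> P" using S by auto
    have "px S \<notin> T3 S" using px[OF SP] T3disj[of S "h S"] hPS[OF SP] PS[OF SP] by blast
    thus ?thesis using False SP N2[of S] PN fT3[of S] PS[OF SP] by (auto simp: T_def)
  qed
  have Tcard: "1 \<le> card (T S)" if S: "S \<in> \<S>" for S
  proof -
    consider "S \<in> F \<union> P" | "S \<notin> F \<union> P" "S \<in> h ` P" | "S \<notin> F \<union> P" "S \<notin> h ` P" by blast
    then show ?thesis
    proof cases
      case 1 thus ?thesis using Trich by simp
    next
      case 2
      have "card (T3 S) = 2" using N2[of S] S 2 by (auto simp: N_def)
      thus ?thesis using 2 by (auto simp: T_def card_Diff_singleton_if)
    next
      case 3 thus ?thesis using T3ge[OF S] by (auto simp: T_def)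
    qed
  qed
  have TE: "T S \<subseteq> T3 S \<union> (if S \<in> P then {px S} else {})" for S
    using B by (auto simp: T_def)
  have key: "px S \<notin> T S'" if S: "S \<in> P" and S': "S' \<in> \<S>" "S' \<noteq> S" for S S'
  proof (cases "S' = h S")
    case True
    have "inv_into P h S' = S" using True inv_into_f_f[OF injh S] by simp
    moreover have "S' \<notin> F" "S' \<notin> P" "S' \<in> h ` P" using hPS[OF S] True S by auto
    ultimately show ?thesis by (simp add: T_def)
  next
    case False
    have "px S \<in> T3 (h S)" using px[OF S] by simp
    hence n1: "px S \<notin> T3 S'" using T3disj[of "h S" S'] hPS[OF S] S' False by blast
    have n2: "px S \<noteq> px S'" if S'P: "S' \<in> P"
    proof -
      have "h S' \<noteq> h S" using injh S S'P S'(2) by (meson inj_on_contraD)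
      hence "T3 (h S) \<inter> T3 (h S') = {}" using T3disj hPS S S'P by metis
      thus ?thesis using px[OF S] px[OF S'P] by auto
    qed
    show ?thesis using TE[of S'] n1 n2 by (auto split: if_splits)
  qed
  have Tdisj: "T S \<inter> T S' = {}" if S: "S \<in> \<S>" "S' \<in> \<S>" "S \<noteq> S'" for S S'
  proof -
    have d: "T3 S \<inter> T3 S' = {}" using T3disj S by blast
    have k1: "S \<in> P \<Longrightarrow> px S \<notin> T S'" using key S by blast
    have k2: "S' \<in> P \<Longrightarrow> px S' \<notin> T S" using key S by metis
    show ?thesis using TE[of S] TE[of S'] d k1 k2 by (auto split: if_splits)
  qed
  define Q where "Q = P \<union> h ` P"
  have finAv: "finite Av" using finite_subset[OF _ finS, of Av] NS by (auto simp: Av_def)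
  have cQ: "card Q = 2 * card P"
  proof -
    have "P \<inter> h ` P = {}" using hP by auto
    hence "card Q = card P + card (h ` P)" using finP by (simp add: Q_def card_Un_disjoint)
    thus ?thesis using card_image[OF injh] by simp
  qed
  have QN: "Q \<subseteq> N" using PN hP by (auto simp: Q_def)
  have finQ: "finite Q" using finP by (simp add: Q_def)
  have AvQ: "Av = N - Q" by (auto simp: Av_def Q_def)
  have Sdec: "\<S> = F \<union> (Q \<union> Av)" using NS QN AvQ FS by (auto simp: N_def)
  have cS: "card \<S> = card F + card Q + card Av"
  proof -
    have dj: "F \<inter> (Q \<union> Av) = {}" using QN by (auto simp: Av_def N_def)
    have fF: "finite F" using finite_subset[OF FS finS] .
    have "card \<S> = card F + card (Q \<union> Av)"
      using Sdec card_Un_disjoint[OF fF _ dj] finQ finAv by simp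
    also have "card (Q \<union> Av) = card Q + card Av"
      using finQ finAv by (intro card_Un_disjoint) (auto simp: Av_def Q_def)
    finally show ?thesis by simp
  qed
  have SAv: "\<S> - Av = F \<union> Q" "F \<inter> Q = {}" using NS QN by (auto simp: N_def Av_def Q_def F_def)
  have cover: "(\<Union>S\<in>Av. S - T3 S) \<subseteq> (\<Union>S\<in>\<S> - Av. T3 S)"
  proof
    fix x assume "x \<in> (\<Union>S\<in>Av. S - T3 S)"
    then obtain S where S: "S \<in> Av" "x \<in> S" "x \<notin> T3 S" by blast
    have SS: "S \<in> \<S>" using S NS by (auto simp: Av_def)
    obtain S' where S': "S' \<in> \<S>" "x \<in> T3 S'" using T3cov[OF SS S(2)] by blast
    have "S' \<noteq> S" using S S' by auto
    hence "S' \<notin> Av" using maxl[of S S'] S S' by auto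
    thus "x \<in> (\<Union>S\<in>\<S> - Av. T3 S)" using S' by auto
  qed
  have disjO: "(S - T3 S) \<inter> (S' - T3 S') = {}" if S: "S \<in> Av" "S' \<in> Av" "S \<noteq> S'" for S S'
  proof (rule ccontr)
    assume "(S - T3 S) \<inter> (S' - T3 S') \<noteq> {}"
    then obtain x where x: "x \<in> S" "x \<notin> T3 S" "x \<in> S'" "x \<notin> T3 S'" by blast
    have SS: "S \<in> \<S>" "S' \<in> \<S>" using S NS by (auto simp: Av_def)
    obtain S'' where S'': "S'' \<in> \<S>" "x \<in> T3 S''" using T3cov[OF SS(1) x(1)] by blast
    have "x \<in> S''" using T3sub[OF S''(1)] S''(2) by blast
    moreover have "S'' \<noteq> S" "S'' \<noteq> S'" using x S'' by auto
    ultimately show False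
      using three_le[of \<S> x "\<lambda>s. s" S S' S''] finS degS SS S''(1) x S(3) by auto
  qed
  have cO: "card (S - T3 S) = 2" if S: "S \<in> Av" for S
  proof -
    have SS: "S \<in> \<S>" "S \<in> N" using S NS by (auto simp: Av_def)
    show ?thesis using card_Diff_subset[OF fT3[OF SS(1)] T3sub[OF SS(1)]] four[OF SS(1)] N2[OF SS(2)] by simp
  qed
  have "card (\<Union>S\<in>Av. S - T3 S) = (\<Sum>S\<in>Av. card (S - T3 S))"
    using finAv disjO finE NS by (intro card_UN_disjoint) (auto simp: Av_def)
  also have "\<dots> = 2 * card Av" using cO by simp
  finally have c1: "card (\<Union>S\<in>Av. S - T3 S) = 2 * card Av" .
  have "card (\<Union>S\<in>\<S> - Av. T3 S) \<le> (\<Sum>S\<in>\<S> - Av. card (T3 S))"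
    using finS by (intro card_UN_le) auto
  also have "\<dots> = (\<Sum>S\<in>F. card (T3 S)) + (\<Sum>S\<in>Q. card (T3 S))"
    using SAv finQ finite_subset[OF FS finS] by (simp add: sum.union_disjoint)
  also have "(\<Sum>S\<in>F. card (T3 S)) \<le> 4 * card F"
    using sum_bounded_above[of F "\<lambda>S. card (T3 S)" 4] T3le FS by (auto simp: mult.commute)
  also have "(\<Sum>S\<in>Q. card (T3 S)) = 2 * card Q" using N2 QN by (simp add: subset_iff)
  finally have c2: "card (\<Union>S\<in>\<S> - Av. T3 S) \<le> 4 * card F + 2 * card Q" by simp
  have "card (\<Union>S\<in>Av. S - T3 S) \<le> card (\<Union>S\<in>\<S> - Av. T3 S)"
    by (rule card_mono[OF _ cover]) (use finS fT3 in auto)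
  hence "2 * card Av \<le> 4 * card F + 2 * card Q" using c1 c2 by linarith
  have rich: "card F + card P \<le> card {S \<in> \<S>. card (T S) = 3}"
  proof -
    have "F \<inter> P = {}" using PS by auto
    hence "card (F \<union> P) = card F + card P" using finP finite_subset[OF FS finS] by (simp add: card_Un_disjoint)
    moreover have "card (F \<union> P) \<le> card {S \<in> \<S>. card (T S) = 3}"
      using Trich FS PS finS by (intro card_mono) auto
    ultimately show ?thesis by simp
  qed
  show ?thesis
  proof (intro exI[of _ T] conjI ballI impI)
    fix S assume "S \<in> \<S>" thus "T S \<subseteq> S" "1 \<le> card (T S)" using Tsub Tcard by auto
  next
    fix S S' assume "S \<in> \<S>" "S' \<in> \<S>" "S \<noteq> S'" thus "T S \<inter> T S' = {}" using Tdisj by blast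
  next
    show "card \<S> \<le> 4 * card {S \<in> \<S>. card (T S) = 3}"
      using rich cS cQ \<open>2 * card Av \<le> 4 * card F + 2 * card Q\<close> by linarith
  qed
qed

end
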